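(* Let $g:\mathbb R\to\mathbb R$ be a $\chi$-integrable odd function and define $h(\omega)=\int_{\mathbb R}g(z)c(\omega,z)e^{2V(\omega)}\chi(dz)$. Then for every $\varphi\in\mathcal C$, $$(h,\varphi)_\pi=-\frac12\mathbb M\int_{\mathbb R}g(z)\big(T_z\varphi-\varphi\big)c(\cdot,z)\chi(dz).$$
   Context: $(\Omega,\mathcal G,\mu)$ is a probability space with an ergodic, jointly measurable group $\{\tau_x\}_{x\in\mathbb R}$ of measure-preserving maps; $\mathbb M$ is expectation under $\mu$; $T_x\varphi(\omega)=\varphi(\tau_x\omega)$. $\mathcal C=\mathrm{Span}\{f\star\phi:f\in L^\infty(\Omega),\phi\in C_c^\infty(\mathbb R)\}$, $f\star\phi(\omega)=\int f(\tau_x\omega)\phi(x)dx$. $\chi$ is a symmetric Lévy measure on $\mathbb R$ ($\chi(dz)=\chi(-dz)$), $c:\Omega\times\mathbb R\to[0,\infty)$ is bounded measurable with $c(\tau_z\omega,-z)=c(\omega,z)$ for $\mu$-a.e. $\omega$ and $\chi$-a.e. $z$; $V\in L^\infty(\Omega)$, normalized so that $\pi=e^{-2V}\mu$ is a probability, and $(f,g)_\pi=\mathbb M[fge^{-2V}]$. *)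

theory Defs
  imports "HOL-Probability.Probability"
begin

definition ergodic_flow :: "'a measure \<Rightarrow> (real \<Rightarrow> 'a \<Rightarrow> 'a) \<Rightarrow> bool" where
  "ergodic_flow M \<tau> \<longleftrightarrow>
     prob_space M \<and>
     (\<lambda>(x, \<omega>). \<tau> x \<omega>) \<in> measurable (lborel \<Otimes>\<^sub>M M) M \<and>
     (\<forall>\<omega>\<in>space M. \<tau> 0 \<omega> = \<omega>) \<and>
     (\<forall>x y. \<forall>\<omega>\<in>space M. \<tau> (x + y) \<omega> = \<tau> x (\<tau> y \<omega>)) \<and>
     (\<forall>x. \<tau> x \<in> measurable M M \<and> distr M M (\<tau> x) = M) \<and>
     (\<forall>A\<in>sets M. (\<forall>x. \<tau> x -` A \<inter> space M = A) \<longrightarrow>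
                   measure M A = 0 \<or> measure M A = 1)"

definition symmetric_levy_measure :: "real measure \<Rightarrow> bool" where
  "symmetric_levy_measure \<nu> \<longleftrightarrow>
     sets \<nu> = sets borel \<and> emeasure \<nu> {0} = 0 \<and>
     (\<integral>\<^sup>+ z. ennreal (min 1 (z\<^sup>2)) \<partial>\<nu>) < \<infinity> \<and>
     distr \<nu> borel uminus = \<nu>"

definition Linf :: "'a measure \<Rightarrow> ('a \<Rightarrow> real) set" where
  "Linf M = {f. f \<in> borel_measurable M \<and> (\<exists>B. AE \<omega> in M. \<bar>f \<omega>\<bar> \<le> B)}"

definition Cc_infty :: "(real \<Rightarrow> real) set" where
  "Cc_infty = {\<psi>. (\<forall>n x. ((deriv ^^ n) \<psi>) differentiable (at x)) \<and>
                   compact (closure {x. \<psi> x \<noteq> 0})}"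

definition star :: "(real \<Rightarrow> 'a \<Rightarrow> 'a) \<Rightarrow> ('a \<Rightarrow> real) \<Rightarrow> (real \<Rightarrow> real) \<Rightarrow> 'a \<Rightarrow> real" where
  "star \<tau> f \<psi> \<omega> = (\<integral>x. f (\<tau> x \<omega>) * \<psi> x \<partial>lborel)"

definition core_C :: "'a measure \<Rightarrow> (real \<Rightarrow> 'a \<Rightarrow> 'a) \<Rightarrow> ('a \<Rightarrow> real) set" where
  "core_C M \<tau> = {\<phi>. \<exists>n (a :: nat \<Rightarrow> real) F \<Psi>.
      (\<forall>i<n. F i \<in> Linf M \<and> \<Psi> i \<in> Cc_infty) \<and>
      \<phi> = (\<lambda>\<omega>. \<Sum>i<n. a i * star \<tau> (F i) (\<Psi> i) \<omega>)}"

definition inner_pi :: "'a measure \<Rightarrow> ('a \<Rightarrow> real) \<Rightarrow> ('a \<Rightarrow> real) \<Rightarrow> ('a \<Rightarrow> real) \<Rightarrow> real" where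
  "inner_pi M V f g = (\<integral>\<omega>. f \<omega> * g \<omega> * exp (- 2 * V \<omega>) \<partial>M)"

end

theory Submission
  imports Defs
begin


lemma levy_sigma_finite:
  assumes levy: "symmetric_levy_measure \<nu>"
  shows "sigma_finite_measure \<nu>"
proof
  have sets: "sets \<nu> = sets borel" and fin: "(\<integral>\<^sup>+ z. ennreal (min 1 (z\<^sup>2)) \<partial>\<nu>) < \<infinity>"
    and z0: "emeasure \<nu> {0} = 0"
    using levy by (auto simp: symmetric_levy_measure_def)
  have sp: "space \<nu> = UNIV" using sets_eq_imp_space_eq[OF sets] by simp
  define S where "S n = {z::real. 1 / real (Suc n) \<le> \<bar>z\<bar>}" for n
  have Sm: "S n \<in> sets \<nu>" for n unfolding S_def sets by measurable
  have Sfin: "emeasure \<nu> (S n) \<noteq> \<infinity>" for n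
  proof -
    have "emeasure \<nu> (S n) = (\<integral>\<^sup>+ z. indicator (S n) z \<partial>\<nu>)"
      using Sm by simp
    also have "\<dots> \<le> (\<integral>\<^sup>+ z. ennreal ((real (Suc n))\<^sup>2) * ennreal (min 1 (z\<^sup>2)) \<partial>\<nu>)"
    proof (rule nn_integral_mono)
      fix z assume "z \<in> space \<nu>"
      show "indicator (S n) z \<le> ennreal ((real (Suc n))\<^sup>2) * ennreal (min 1 (z\<^sup>2))"
      proof (cases "z \<in> S n")
        case True
        let ?k = "real (Suc n)"
        have k1: "1 \<le> ?k" by simp
        have "1 / ?k \<le> \<bar>z\<bar>" using True by (simp add: S_def)
        hence "1 \<le> ?k * \<bar>z\<bar>" by (simp add: field_simps)
        hence "1 \<le> (?k * \<bar>z\<bar>)\<^sup>2" by (simp add: one_le_power)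
        hence a: "1 \<le> ?k\<^sup>2 * z\<^sup>2" by (simp add: power_mult_distrib)
        have b: "1 \<le> ?k\<^sup>2 * 1" using k1 by (simp add: one_le_power)
        have "1 \<le> ?k\<^sup>2 * min 1 (z\<^sup>2)" using a b by (simp add: min_def)
        hence "ennreal 1 \<le> ennreal (?k\<^sup>2 * min 1 (z\<^sup>2))" by (rule ennreal_leI)
        thus ?thesis using True by (simp add: ennreal_mult)
      qed simp
    qed
    also have "\<dots> = ennreal ((real (Suc n))\<^sup>2) * (\<integral>\<^sup>+ z. ennreal (min 1 (z\<^sup>2)) \<partial>\<nu>)"
      by (rule nn_integral_cmult) (simp add: measurable_cong_sets[OF sets refl])
    also have "\<dots> < \<infinity>" using fin by (simp add: ennreal_mult_less_top)
    finally show ?thesis by simp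
  qed
  show "\<exists>A. countable A \<and> A \<subseteq> sets \<nu> \<and> \<Union> A = space \<nu> \<and> (\<forall>a\<in>A. emeasure \<nu> a \<noteq> \<infinity>)"
  proof (intro exI conjI)
    let ?A = "insert {0} (range S)"
    show "countable ?A" by simp
    show "?A \<subseteq> sets \<nu>" using Sm by (auto simp: sets)
    show "\<Union> ?A = space \<nu>"
    proof -
      have "z \<in> \<Union> ?A" for z :: real
      proof (cases "z = 0")
        case False
        hence "\<bar>z\<bar> > 0" by simp
        then obtain n where "1 / real (Suc n) < \<bar>z\<bar>" using nat_approx_posE by blast
        thus ?thesis by (auto simp: S_def intro!: exI[of _ n])
      qed simp
      thus ?thesis using sp by auto
    qed
    show "\<forall>a\<in>?A. emeasure \<nu> a \<noteq> \<infinity>" using Sfin z0 by auto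
  qed
qed



lemma prod_integrable:
  fixes f :: "'a \<Rightarrow> real" and g :: "'b \<Rightarrow> real"
  assumes sM: "sigma_finite_measure M" and sN: "sigma_finite_measure N"
    and T: "\<And>y. y \<in> space N \<Longrightarrow> T y \<in> measurable M M \<and> distr M M (T y) = M"
    and fT: "(\<lambda>p. f (T (snd p) (fst p))) \<in> borel_measurable (M \<Otimes>\<^sub>M N)"
    and f: "integrable M f" and g: "integrable N g"
  shows "integrable (M \<Otimes>\<^sub>M N) (\<lambda>p. f (T (snd p) (fst p)) * g (snd p))"
proof -
  interpret P: pair_sigma_finite M N using sM sN by (simp add: pair_sigma_finite_def)
  have gm[measurable]: "g \<in> borel_measurable N" using g by auto
  have fm[measurable]: "f \<in> borel_measurable M" using f by auto
  have fT'[measurable]: "(\<lambda>p. f (T (snd p) (fst p))) \<in> borel_measurable (M \<Otimes>\<^sub>M N)" by (rule fT)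
  have m: "(\<lambda>p. f (T (snd p) (fst p)) * g (snd p)) \<in> borel_measurable (M \<Otimes>\<^sub>M N)" by measurable
  define Cf where "Cf = (\<integral>\<^sup>+ x. ennreal (norm (f x)) \<partial>M)"
  have Cf: "Cf < \<infinity>" using f unfolding Cf_def integrable_iff_bounded by simp
  have Cg: "(\<integral>\<^sup>+ y. ennreal (norm (g y)) \<partial>N) < \<infinity>" using g unfolding integrable_iff_bounded by simp
  have inner: "(\<integral>\<^sup>+ x. ennreal (norm (f (T y x) * g y)) \<partial>M) = ennreal (norm (g y)) * Cf"
    if y: "y \<in> space N" for y
  proof -
    have Tm: "T y \<in> measurable M M" and Td: "distr M M (T y) = M" using T[OF y] by auto
    have "(\<integral>\<^sup>+ x. ennreal (norm (f (T y x) * g y)) \<partial>M) = (\<integral>\<^sup>+ x. ennreal (norm (f (T y x))) * ennreal (norm (g y)) \<partial>M)"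
      by (simp add: abs_mult ennreal_mult)
    also have "\<dots> = (\<integral>\<^sup>+ x. ennreal (norm (f (T y x))) \<partial>M) * ennreal (norm (g y))"
      by (rule nn_integral_multc) (intro measurable_compose[OF Tm] borel_measurable_norm[THEN measurable_compose_rev] fm; measurable)
    also have "(\<integral>\<^sup>+ x. ennreal (norm (f (T y x))) \<partial>M) = (\<integral>\<^sup>+ x. ennreal (norm (f x)) \<partial>(distr M M (T y)))"
      by (rule nn_integral_distr[symmetric, OF Tm]) simp
    also have "\<dots> = Cf" unfolding Td Cf_def ..
    finally show ?thesis by (simp add: mult.commute)
  qed
  have "(\<integral>\<^sup>+ p. ennreal (norm (f (T (snd p) (fst p)) * g (snd p))) \<partial>(M \<Otimes>\<^sub>M N))
      = (\<integral>\<^sup>+ y. \<integral>\<^sup>+ x. ennreal (norm (f (T y x) * g y)) \<partial>M \<partial>N)"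
    using P.nn_integral_snd[of "\<lambda>p. ennreal (norm (f (T (snd p) (fst p)) * g (snd p)))"] m by simp
  also have "\<dots> = (\<integral>\<^sup>+ y. ennreal (norm (g y)) * Cf \<partial>N)"
    by (rule nn_integral_cong) (use inner in simp)
  also have "\<dots> = (\<integral>\<^sup>+ y. ennreal (norm (g y)) \<partial>N) * Cf"
    by (rule nn_integral_multc) measurable
  also have "\<dots> < \<infinity>" using Cf Cg by (simp add: ennreal_mult_less_top)
  finally show ?thesis unfolding integrable_iff_bounded using m by simp
qed



lemma flow_facts:
  assumes flow: "ergodic_flow M \<tau>"
  shows "prob_space M"
    and "(\<lambda>p. \<tau> (snd p) (fst p)) \<in> measurable (M \<Otimes>\<^sub>M lborel) M"
    and "\<And>x. \<tau> x \<in> measurable M M \<and> distr M M (\<tau> x) = M"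
proof -
  show "prob_space M" using flow by (simp add: ergodic_flow_def)
  have tm: "(\<lambda>(x, \<omega>). \<tau> x \<omega>) \<in> measurable (lborel \<Otimes>\<^sub>M M) M" using flow by (simp add: ergodic_flow_def)
  have "(\<lambda>p. \<tau> (snd p) (fst p)) = (\<lambda>(x, \<omega>). \<tau> x \<omega>) \<circ> (\<lambda>(x,y). (y,x))" by auto
  thus "(\<lambda>p. \<tau> (snd p) (fst p)) \<in> measurable (M \<Otimes>\<^sub>M lborel) M"
    using measurable_comp[OF measurable_pair_swap' tm] by simp
  show "\<And>x. \<tau> x \<in> measurable M M \<and> distr M M (\<tau> x) = M" using flow by (simp add: ergodic_flow_def)
qed

lemma Cc_integrable:
  assumes "\<Psi> \<in> Cc_infty" shows "integrable lborel \<Psi>"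
proof -
  have d: "\<And>x. \<Psi> differentiable (at x)" and K: "compact (closure {x. \<Psi> x \<noteq> 0})"
    using assms[unfolded Cc_infty_def] by (auto dest: spec[of _ 0])
  have "continuous_on UNIV \<Psi>"
    by (rule differentiable_imp_continuous_on) (simp add: differentiable_on_def d differentiable_at_withinI)
  hence "continuous_on (closure {x. \<Psi> x \<noteq> 0}) \<Psi>" by (rule continuous_on_subset) simp
  from borel_integrable_compact[OF K this]
  have "integrable lborel (\<lambda>x. indicator (closure {x. \<Psi> x \<noteq> 0}) x *\<^sub>R \<Psi> x)" .
  moreover have "(\<lambda>x. indicator (closure {x. \<Psi> x \<noteq> 0}) x *\<^sub>R \<Psi> x) = \<Psi>"
  proof
    fix x show "indicator (closure {x. \<Psi> x \<noteq> 0}) x *\<^sub>R \<Psi> x = \<Psi> x"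
      using closure_subset[of "{x. \<Psi> x \<noteq> 0}"] by (cases "\<Psi> x = 0") (auto simp: indicator_def)
  qed
  ultimately show ?thesis by simp
qed

lemma star_integrable:
  assumes flow: "ergodic_flow M \<tau>" and F: "F \<in> Linf M" and \<Psi>: "\<Psi> \<in> Cc_infty"
  shows "integrable M (star \<tau> F \<Psi>)"
proof -
  interpret M: prob_space M using flow_facts[OF flow] by simp
  interpret P: pair_sigma_finite M lborel by unfold_locales
  have tm[measurable]: "(\<lambda>p. \<tau> (snd p) (fst p)) \<in> measurable (M \<Otimes>\<^sub>M lborel) M" using flow_facts[OF flow] by simp
  obtain B where Fm[measurable]: "F \<in> borel_measurable M" and FB: "AE \<omega> in M. \<bar>F \<omega>\<bar> \<le> B"
    using F by (auto simp: Linf_def)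
  have Fi: "integrable M F" using FB by (intro M.integrable_const_bound[of _ B]) auto
  have "integrable (M \<Otimes>\<^sub>M lborel) (\<lambda>p. F (\<tau> (snd p) (fst p)) * \<Psi> (snd p))"
    by (rule prod_integrable[OF M.sigma_finite_measure_axioms lborel.sigma_finite_measure_axioms
          _ _ Fi Cc_integrable[OF \<Psi>]]) (use flow_facts[OF flow] in auto)
  from P.integrable_fst'[OF this] show ?thesis by (simp add: star_def[abs_def])
qed

lemma core_integrable:
  assumes flow: "ergodic_flow M \<tau>" and "\<phi> \<in> core_C M \<tau>"
  shows "integrable M \<phi>"
proof -
  obtain n F \<Psi> a where h: "\<forall>i<(n::nat). F i \<in> Linf M \<and> \<Psi> i \<in> Cc_infty"
    and eq: "\<phi> = (\<lambda>\<omega>. \<Sum>i<n. a i * star \<tau> (F i) (\<Psi> i) \<omega>)"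
    using assms(2) unfolding core_C_def mem_Collect_eq by (elim exE conjE) blast
  show ?thesis unfolding eq
  proof (rule Bochner_Integration.integrable_sum[where f="\<lambda>i \<omega>. a i * star \<tau> (F i) (\<Psi> i) \<omega>"])
    fix i assume "i \<in> {..<n}"
    thus "integrable M (\<lambda>\<omega>. a i * star \<tau> (F i) (\<Psi> i) \<omega>)"
      using h star_integrable[OF flow, of "F i" "\<Psi> i"] by auto
  qed
qed



lemma bnd1: "0 \<le> (c::real) \<Longrightarrow> c \<le> B \<Longrightarrow> \<bar>a * b * c\<bar> \<le> \<bar>B * (b * a)\<bar>"
proof -
  assume c: "0 \<le> c" "c \<le> B"
  have "\<bar>a * b * c\<bar> = \<bar>a * b\<bar> * c" using c by (simp add: abs_mult)
  also have "\<dots> \<le> \<bar>a * b\<bar> * B" by (rule mult_left_mono) (use c in auto)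
  also have "\<dots> = \<bar>B * (b * a)\<bar>" using c by (simp add: abs_mult mult_ac)
  finally show ?thesis .
qed
lemma bnd2: "0 \<le> (c::real) \<Longrightarrow> c \<le> B \<Longrightarrow> \<bar>a * b * c\<bar> \<le> \<bar>B * (a * b)\<bar>"
  using bnd1[of c B a b] by (simp add: mult_ac)

theorem mainTheorem14:
  fixes M :: "'a measure" and \<tau> :: "real \<Rightarrow> 'a \<Rightarrow> 'a" and \<nu> :: "real measure"
    and c :: "'a \<Rightarrow> real \<Rightarrow> real" and V :: "'a \<Rightarrow> real" and g :: "real \<Rightarrow> real"
    and \<phi> :: "'a \<Rightarrow> real"
  assumes flow: "ergodic_flow M \<tau>"
    and levy: "symmetric_levy_measure \<nu>"
    and c_meas: "(\<lambda>(\<omega>, z). c \<omega> z) \<in> borel_measurable (M \<Otimes>\<^sub>M \<nu>)"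
    and c_nonneg: "\<And>\<omega> z. 0 \<le> c \<omega> z"
    and c_bdd: "\<exists>B. \<forall>\<omega> z. c \<omega> z \<le> B"
    and c_sym: "AE \<omega> in M. AE z in \<nu>. c (\<tau> z \<omega>) (- z) = c \<omega> z"
    and V_Linf: "V \<in> Linf M"
    and V_norm: "prob_space (density M (\<lambda>\<omega>. ennreal (exp (- 2 * V \<omega>))))"
    and g_int: "integrable \<nu> g"
    and g_odd: "\<And>z. g (- z) = - g z"
    and \<phi>_C: "\<phi> \<in> core_C M \<tau>"
  shows "inner_pi M V (\<lambda>\<omega>. \<integral>z. g z * c \<omega> z * exp (2 * V \<omega>) \<partial>\<nu>) \<phi>
         = - (1/2) * (\<integral>\<omega>. (\<integral>z. g z * (\<phi> (\<tau> z \<omega>) - \<phi> \<omega>) * c \<omega> z \<partial>\<nu>) \<partial>M)"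
proof -
  interpret M: prob_space M using flow_facts[OF flow] by simp
  interpret N: sigma_finite_measure \<nu> using levy_sigma_finite[OF levy] .
  interpret P: pair_sigma_finite M \<nu> by unfold_locales
  have setsN: "sets \<nu> = sets borel" and symN: "distr \<nu> borel uminus = \<nu>"
    using levy by (auto simp: symmetric_levy_measure_def)
  have spN: "space \<nu> = UNIV" using sets_eq_imp_space_eq[OF setsN] by simp
  obtain B where cB: "\<And>\<omega> z. c \<omega> z \<le> B" using c_bdd by blast
  have Tz: "\<And>x. \<tau> x \<in> measurable M M \<and> distr M M (\<tau> x) = M" using flow_facts[OF flow] by simp
  have sP: "sets (M \<Otimes>\<^sub>M \<nu>) = sets (M \<Otimes>\<^sub>M lborel)"
    by (rule sets_pair_measure_cong) (simp_all add: setsN)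
  have tm[measurable]: "(\<lambda>p. \<tau> (snd p) (fst p)) \<in> measurable (M \<Otimes>\<^sub>M \<nu>) M"
    unfolding measurable_cong_sets[OF sP refl] by (rule flow_facts(2)[OF flow])
  have \<phi>i: "integrable M \<phi>" by (rule core_integrable[OF flow \<phi>_C])
  have \<phi>m[measurable]: "\<phi> \<in> borel_measurable M" using \<phi>i by auto
  have gm[measurable]: "g \<in> borel_measurable \<nu>" using g_int by auto
  have um[measurable]: "uminus \<in> measurable \<nu> \<nu>"
    using measurable_cong_sets[OF setsN setsN] by simp
  have c1[measurable]: "(\<lambda>p. c (fst p) (snd p)) \<in> borel_measurable (M \<Otimes>\<^sub>M \<nu>)"
    using c_meas by (simp add: split_beta')
  have c2[measurable]: "(\<lambda>p. c (\<tau> (snd p) (fst p)) (- snd p)) \<in> borel_measurable (M \<Otimes>\<^sub>M \<nu>)"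
  proof -
    have "(\<lambda>p. (\<tau> (snd p) (fst p), - snd p)) \<in> measurable (M \<Otimes>\<^sub>M \<nu>) (M \<Otimes>\<^sub>M \<nu>)" by measurable
    from measurable_compose[OF this c1] show ?thesis by simp
  qed
  have c3[measurable]: "(\<lambda>p. c (fst p) (- snd p)) \<in> borel_measurable (M \<Otimes>\<^sub>M \<nu>)"
  proof -
    have "(\<lambda>p. (fst p, - snd p)) \<in> measurable (M \<Otimes>\<^sub>M \<nu>) (M \<Otimes>\<^sub>M \<nu>)" by measurable
    from measurable_compose[OF this c1] show ?thesis by simp
  qed
  have \<phi>tm[measurable]: "(\<lambda>p. \<phi> (\<tau> (snd p) (fst p))) \<in> borel_measurable (M \<Otimes>\<^sub>M \<nu>)" by measurable
  have I0: "integrable (M \<Otimes>\<^sub>M \<nu>) (\<lambda>p. \<phi> (\<tau> (snd p) (fst p)) * g (snd p))"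
    by (rule prod_integrable[OF M.sigma_finite_measure_axioms N.sigma_finite_measure_axioms _ _ \<phi>i g_int])
       (use Tz in auto)
  have I1: "integrable (M \<Otimes>\<^sub>M \<nu>) (\<lambda>p. \<phi> ((\<lambda>x. x) (fst p)) * g (snd p))"
    by (rule prod_integrable[OF M.sigma_finite_measure_axioms N.sigma_finite_measure_axioms, of "\<lambda>_ x. x"])
       (auto simp: distr_id \<phi>i g_int)
  have cB0: "0 \<le> B" using c_nonneg[of undefined undefined] cB[of undefined undefined] by linarith
  define h where "h \<omega> z = g z * \<phi> (\<tau> z \<omega>) * c \<omega> z" for \<omega> z
  define h' where "h' \<omega> z = g z * \<phi> (\<tau> z \<omega>) * c (\<tau> z \<omega>) (- z)" for \<omega> z
  define k where "k \<omega> z = \<phi> \<omega> * g z * c \<omega> z" for \<omega> z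
  define k1 where "k1 \<omega> z = g z * \<phi> \<omega> * c \<omega> (- z)" for \<omega> z
  have hm: "(\<lambda>p. h (fst p) (snd p)) \<in> borel_measurable (M \<Otimes>\<^sub>M \<nu>)" unfolding h_def by measurable
  have h'm: "(\<lambda>p. h' (fst p) (snd p)) \<in> borel_measurable (M \<Otimes>\<^sub>M \<nu>)" unfolding h'_def by measurable
  have km: "(\<lambda>p. k (fst p) (snd p)) \<in> borel_measurable (M \<Otimes>\<^sub>M \<nu>)" unfolding k_def by measurable
  have k1m: "(\<lambda>p. k1 (fst p) (snd p)) \<in> borel_measurable (M \<Otimes>\<^sub>M \<nu>)" unfolding k1_def by measurable
  have Ih: "integrable (M \<Otimes>\<^sub>M \<nu>) (\<lambda>p. h (fst p) (snd p))"
    by (rule Bochner_Integration.integrable_bound[OF Bochner_Integration.integrable_mult_right[OF I0, of B] hm])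
       (auto simp: h_def intro!: bnd1 c_nonneg cB)
  have Ih': "integrable (M \<Otimes>\<^sub>M \<nu>) (\<lambda>p. h' (fst p) (snd p))"
    by (rule Bochner_Integration.integrable_bound[OF Bochner_Integration.integrable_mult_right[OF I0, of B] h'm])
       (auto simp: h'_def intro!: bnd1 c_nonneg cB)
  have Ik: "integrable (M \<Otimes>\<^sub>M \<nu>) (\<lambda>p. k (fst p) (snd p))"
    by (rule Bochner_Integration.integrable_bound[OF Bochner_Integration.integrable_mult_right[OF I1, of B] km])
       (auto simp: k_def intro!: bnd2 c_nonneg cB)
  have Ik1: "integrable (M \<Otimes>\<^sub>M \<nu>) (\<lambda>p. k1 (fst p) (snd p))"
    by (rule Bochner_Integration.integrable_bound[OF Bochner_Integration.integrable_mult_right[OF I1, of B] k1m])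
       (auto simp: k1_def intro!: bnd1 c_nonneg cB)
  have ae: "AE p in M \<Otimes>\<^sub>M \<nu>. c (\<tau> (snd p) (fst p)) (- snd p) = c (fst p) (snd p)"
    by (rule P.AE_pair_measure) (use c_sym in simp_all)
  have E1: "integral\<^sup>L (M \<Otimes>\<^sub>M \<nu>) (\<lambda>p. h (fst p) (snd p)) = integral\<^sup>L (M \<Otimes>\<^sub>M \<nu>) (\<lambda>p. h' (fst p) (snd p))"
    by (rule integral_cong_AE[OF hm h'm]) (use ae in \<open>auto simp: h_def h'_def\<close>)
  have cp: "\<And>f. (\<lambda>p. f (fst p) (snd p)) = case_prod f" by (auto simp: fun_eq_iff)
  have E2: "integral\<^sup>L (M \<Otimes>\<^sub>M \<nu>) (\<lambda>p. h' (fst p) (snd p)) = (\<integral>z. (\<integral>\<omega>. h' \<omega> z \<partial>M) \<partial>\<nu>)"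
    using P.integral_snd[of h'] Ih' unfolding cp by simp
  have E3: "(\<integral>\<omega>. h' \<omega> z \<partial>M) = (\<integral>\<omega>. k1 \<omega> z \<partial>M)" for z
  proof -
    have Tm: "\<tau> z \<in> measurable M M" and Td: "distr M M (\<tau> z) = M" using Tz[of z] by auto
    have "(\<lambda>\<omega>. (\<omega>, z)) \<in> measurable M (M \<Otimes>\<^sub>M \<nu>)"
      by (rule measurable_Pair[OF measurable_ident_sets[OF refl] measurable_const]) (simp add: spN)
    from measurable_compose[OF this k1m] have k1z: "(\<lambda>\<omega>. k1 \<omega> z) \<in> borel_measurable M" by simp
    have "(\<integral>\<omega>. k1 \<omega> z \<partial>M) = (\<integral>\<omega>. k1 \<omega> z \<partial>(distr M M (\<tau> z)))" using Td by simp
    also have "\<dots> = (\<integral>\<omega>. k1 (\<tau> z \<omega>) z \<partial>M)" by (rule integral_distr[OF Tm k1z])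
    also have "\<dots> = (\<integral>\<omega>. h' \<omega> z \<partial>M)" by (simp add: k1_def h'_def)
    finally show ?thesis by simp
  qed
  define F where "F z = (\<integral>\<omega>. k1 \<omega> z \<partial>M)" for z
  have Fm: "F \<in> borel_measurable \<nu>"
    using borel_measurable_integrable[OF P.integrable_snd[of k1]] Ik1 unfolding cp F_def[abs_def] by simp
  have Fb: "F \<in> borel_measurable borel" using Fm unfolding measurable_cong_sets[OF setsN refl] .
  have umb: "uminus \<in> measurable \<nu> borel" using um unfolding measurable_cong_sets[OF refl setsN] .
  have E4: "(\<integral>z. F z \<partial>\<nu>) = (\<integral>z. F (- z) \<partial>\<nu>)"
  proof -
    have "(\<integral>z. F z \<partial>\<nu>) = (\<integral>z. F z \<partial>(distr \<nu> borel uminus))" using symN by simp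
    also have "\<dots> = (\<integral>z. F (- z) \<partial>\<nu>)" by (rule integral_distr[OF umb Fb])
    finally show ?thesis .
  qed
  have E5: "F (- z) = - (\<integral>\<omega>. k \<omega> z \<partial>M)" for z
  proof -
    have "F (- z) = (\<integral>\<omega>. - k \<omega> z \<partial>M)" unfolding F_def
      by (rule Bochner_Integration.integral_cong) (auto simp: k1_def k_def g_odd)
    thus ?thesis by simp
  qed
  have E6: "integral\<^sup>L (M \<Otimes>\<^sub>M \<nu>) (\<lambda>p. k (fst p) (snd p)) = (\<integral>z. (\<integral>\<omega>. k \<omega> z \<partial>M) \<partial>\<nu>)"
    using P.integral_snd[of k] Ik unfolding cp by simp
  have HK: "integral\<^sup>L (M \<Otimes>\<^sub>M \<nu>) (\<lambda>p. h (fst p) (snd p)) = - integral\<^sup>L (M \<Otimes>\<^sub>M \<nu>) (\<lambda>p. k (fst p) (snd p))"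
    unfolding E1 E2 E3 E6 F_def[symmetric] E4 E5 by simp
  have Fh: "(\<integral>\<omega>. (\<integral>z. h \<omega> z \<partial>\<nu>) \<partial>M) = integral\<^sup>L (M \<Otimes>\<^sub>M \<nu>) (\<lambda>p. h (fst p) (snd p))"
    using P.integral_fst'[OF Ih] by simp
  have Fk: "(\<integral>\<omega>. (\<integral>z. k \<omega> z \<partial>\<nu>) \<partial>M) = integral\<^sup>L (M \<Otimes>\<^sub>M \<nu>) (\<lambda>p. k (fst p) (snd p))"
    using P.integral_fst'[OF Ik] by simp
  have ih: "integrable M (\<lambda>\<omega>. \<integral>z. h \<omega> z \<partial>\<nu>)" using P.integrable_fst'[OF Ih] by simp
  have ik: "integrable M (\<lambda>\<omega>. \<integral>z. k \<omega> z \<partial>\<nu>)" using P.integrable_fst'[OF Ik] by simp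
  have aeh: "AE \<omega> in M. integrable \<nu> (h \<omega>)" using P.AE_integrable_fst'[OF Ih] by simp
  have aek: "AE \<omega> in M. integrable \<nu> (k \<omega>)" using P.AE_integrable_fst'[OF Ik] by simp
  have R: "(\<integral>\<omega>. (\<integral>z. g z * (\<phi> (\<tau> z \<omega>) - \<phi> \<omega>) * c \<omega> z \<partial>\<nu>) \<partial>M)
      = (\<integral>\<omega>. (\<integral>z. h \<omega> z \<partial>\<nu>) - (\<integral>z. k \<omega> z \<partial>\<nu>) \<partial>M)"
  proof (rule integral_cong_AE)
    show "AE \<omega> in M. (\<integral>z. g z * (\<phi> (\<tau> z \<omega>) - \<phi> \<omega>) * c \<omega> z \<partial>\<nu>) = (\<integral>z. h \<omega> z \<partial>\<nu>) - (\<integral>z. k \<omega> z \<partial>\<nu>)"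
      using aeh aek
    proof eventually_elim
      case (elim \<omega>)
      have "(\<integral>z. h \<omega> z \<partial>\<nu>) - (\<integral>z. k \<omega> z \<partial>\<nu>) = (\<integral>z. h \<omega> z - k \<omega> z \<partial>\<nu>)"
        using elim by (simp add: Bochner_Integration.integral_diff)
      also have "\<dots> = (\<integral>z. g z * (\<phi> (\<tau> z \<omega>) - \<phi> \<omega>) * c \<omega> z \<partial>\<nu>)"
        by (rule Bochner_Integration.integral_cong) (auto simp: h_def k_def algebra_simps)
      finally show ?case by simp
    qed
  next
    show "(\<lambda>\<omega>. \<integral>z. g z * (\<phi> (\<tau> z \<omega>) - \<phi> \<omega>) * c \<omega> z \<partial>\<nu>) \<in> borel_measurable M"
    proof -
      have "(\<lambda>p. g (snd p) * (\<phi> (\<tau> (snd p) (fst p)) - \<phi> (fst p)) * c (fst p) (snd p)) \<in> borel_measurable (M \<Otimes>\<^sub>M \<nu>)"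
        by measurable
      thus ?thesis by (intro N.borel_measurable_lebesgue_integral) (simp add: split_beta')
    qed
  next
    show "(\<lambda>\<omega>. (\<integral>z. h \<omega> z \<partial>\<nu>) - (\<integral>z. k \<omega> z \<partial>\<nu>)) \<in> borel_measurable M"
      using ih ik by auto
  qed
  have R2: "(\<integral>\<omega>. (\<integral>z. h \<omega> z \<partial>\<nu>) - (\<integral>z. k \<omega> z \<partial>\<nu>) \<partial>M)
     = (\<integral>\<omega>. (\<integral>z. h \<omega> z \<partial>\<nu>) \<partial>M) - (\<integral>\<omega>. (\<integral>z. k \<omega> z \<partial>\<nu>) \<partial>M)"
    by (rule Bochner_Integration.integral_diff[OF ih ik])
  have L: "inner_pi M V (\<lambda>\<omega>. \<integral>z. g z * c \<omega> z * exp (2 * V \<omega>) \<partial>\<nu>) \<phi>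
      = (\<integral>\<omega>. (\<integral>z. k \<omega> z \<partial>\<nu>) \<partial>M)"
    unfolding inner_pi_def
  proof (rule Bochner_Integration.integral_cong[OF refl])
    fix \<omega>
    have e: "exp (2 * V \<omega>) * exp (- 2 * V \<omega>) = 1" by (simp add: exp_add[symmetric])
    have "(\<integral>z. k \<omega> z \<partial>\<nu>) = (\<integral>z. \<phi> \<omega> * (g z * c \<omega> z) \<partial>\<nu>)"
      by (simp add: k_def mult.assoc)
    also have "\<dots> = \<phi> \<omega> * (\<integral>z. g z * c \<omega> z \<partial>\<nu>)" by simp
    finally have kk: "(\<integral>z. k \<omega> z \<partial>\<nu>) = \<phi> \<omega> * (\<integral>z. g z * c \<omega> z \<partial>\<nu>)" .
    have "(\<integral>z. g z * c \<omega> z * exp (2 * V \<omega>) \<partial>\<nu>) * \<phi> \<omega> * exp (- 2 * V \<omega>)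
        = (\<integral>z. g z * c \<omega> z \<partial>\<nu>) * \<phi> \<omega> * (exp (2 * V \<omega>) * exp (- 2 * V \<omega>))"
      unfolding integral_mult_left_zero by (simp only: mult_ac)
    also have "\<dots> = (\<integral>z. k \<omega> z \<partial>\<nu>)" unfolding e kk by simp
    finally show "(\<integral>z. g z * c \<omega> z * exp (2 * V \<omega>) \<partial>\<nu>) * \<phi> \<omega> * exp (- 2 * V \<omega>) = (\<integral>z. k \<omega> z \<partial>\<nu>)" .
  qed
  show ?thesis unfolding L R R2 Fh Fk HK by simp
qed

end
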